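(* Let $d=(L,Z)$ be a pure Euler diagram such that for each missing zone $z\in M(d)$ there is a contour $\ell\in L$ with $\mathrm{adj}(z,\ell)\in M(d)$, and let $L'=\{c\in L\mid M(d\setminus c)\neq\emptyset\}$. Then for every Heyting algebra and every valuation $v$, $\bigwedge_{c\in L'}[\![d\setminus c]\!]_v=[\![d]\!]_v$.
   Context: Fix a countably infinite set $\mathcal V$ of propositional variables. A Heyting algebra $(H,\vee,\wedge,\to,0,1)$ is a bounded distributive lattice with a binary operation $\to$ such that $c\wedge a\le b\iff c\le a\to b$; empty meets are $1$, empty joins are $0$. A valuation is a map $v:\mathcal V\to H$. For a finite $L\subset\mathcal V$, a zone over $L$ is a pair $z=(\mathrm{in}(z),\mathrm{out}(z))$ of disjoint subsets of $L$ with union $L$; $\mathcal Z(L)$ is the set of all zones over $L$. Missing-zone semantics: $m_v(z)=\big(\bigwedge_{c\in\mathrm{in}(z)}v(c)\big)\to\big(\bigvee_{c\in\mathrm{out}(z)}v(c)\big)$. A pure Euler diagram is $d=(L,Z)$ with $Z\subseteq\mathcal Z(L)$; its missing zones are $M(d)=\mathcal Z(L)\setminus Z$ and $[\![d]\!]_v=\bigwedge_{z\in M(d)}m_v(z)$. For $c\in L$, $\mathrm{adj}(z,c)$ is the zone obtained from $z$ by moving $c$ from $\mathrm{out}(z)$ to $\mathrm{in}(z)$ or from $\mathrm{in}(z)$ to $\mathrm{out}(z)$. Reduction: $z\setminus c=(\mathrm{in}(z)\setminus\{c\},\mathrm{out}(z)\setminus\{c\})$ and $d\setminus c=(L\setminus\{c\},\{z\setminus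 c: z\in Z\})$, a pure Euler diagram over $L\setminus\{c\}$. *)

theory Defs
  imports Main
begin

class heyting_algebra = distrib_lattice + bounded_lattice +
  fixes himp :: "'a \<Rightarrow> 'a \<Rightarrow> 'a" (infixr "\<Rightarrow>\<^sub>H" 60)
  assumes himp_residuation: "inf c a \<le> b \<longleftrightarrow> c \<le> himp a b"

definition fmeet :: "('b \<Rightarrow> 'a::bounded_lattice) \<Rightarrow> 'b set \<Rightarrow> 'a" where
  "fmeet f A = Finite_Set.fold (\<lambda>x acc. inf (f x) acc) top A"

definition fjoin :: "('b \<Rightarrow> 'a::bounded_lattice) \<Rightarrow> 'b set \<Rightarrow> 'a" where
  "fjoin f A = Finite_Set.fold (\<lambda>x acc. sup (f x) acc) bot A"

text \<open>Propositional variables: the countably infinite type nat.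
A zone is a pair (in, out) of sets of variables.\<close>

type_synonym var = nat
type_synonym zone = "var set \<times> var set"

definition zones :: "var set \<Rightarrow> zone set" where
  "zones L = {z. fst z \<inter> snd z = {} \<and> fst z \<union> snd z = L}"

definition pure_euler_diagram :: "var set \<Rightarrow> zone set \<Rightarrow> bool" where
  "pure_euler_diagram L Z \<longleftrightarrow> finite L \<and> Z \<subseteq> zones L"

definition missing :: "var set \<Rightarrow> zone set \<Rightarrow> zone set" where
  "missing L Z = zones L - Z"

definition mzone :: "(var \<Rightarrow> 'a::heyting_algebra) \<Rightarrow> zone \<Rightarrow> 'a" where
  "mzone v z = himp (fmeet v (fst z)) (fjoin v (snd z))"

definition sem :: "var set \<Rightarrow> zone set \<Rightarrow> (var \<Rightarrow> 'a::heyting_algebra) \<Rightarrow> 'a" where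
  "sem L Z v = fmeet (mzone v) (missing L Z)"

definition adj :: "zone \<Rightarrow> var \<Rightarrow> zone" where
  "adj z c = (if c \<in> fst z then (fst z - {c}, snd z \<union> {c})
              else (fst z \<union> {c}, snd z - {c}))"

definition zred :: "zone \<Rightarrow> var \<Rightarrow> zone" where
  "zred z c = (fst z - {c}, snd z - {c})"

definition red_L :: "var set \<Rightarrow> var \<Rightarrow> var set" where
  "red_L L c = L - {c}"

definition red_Z :: "zone set \<Rightarrow> var \<Rightarrow> zone set" where
  "red_Z Z c = (\<lambda>z. zred z c) ` Z"

end

theory Submission
  imports Defs
begin

lemma himp_iff: "(x::'a::heyting_algebra) \<le> himp a b \<longleftrightarrow> inf x a \<le> b"
  using himp_residuation by blast

lemma himp_split:
  fixes a b c :: "'a::heyting_algebra"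
  shows "himp a b = inf (himp (inf c a) b) (himp a (sup c b))"
proof -
  have "x \<le> himp a b \<longleftrightarrow> x \<le> inf (himp (inf c a) b) (himp a (sup c b))" for x
  proof -
    have "x \<le> inf (himp (inf c a) b) (himp a (sup c b)) \<longleftrightarrow>
          inf x (inf c a) \<le> b \<and> inf x a \<le> sup c b"
      by (simp add: himp_iff)
    also have "\<dots> \<longleftrightarrow> inf x a \<le> b"
    proof
      assume h: "inf x (inf c a) \<le> b \<and> inf x a \<le> sup c b"
      have "inf x a = inf (inf x a) (sup c b)" using h by (simp add: inf_absorb1)
      also have "\<dots> = sup (inf (inf x a) c) (inf (inf x a) b)" by (rule inf_sup_distrib1)
      also have "\<dots> \<le> b"
      proof (rule sup_least)
        have "inf (inf x a) c = inf x (inf c a)" by (simp add: ac_simps)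
        then show "inf (inf x a) c \<le> b" using h by simp
      qed simp
      finally show "inf x a \<le> b" .
    next
      assume "inf x a \<le> b"
      then show "inf x (inf c a) \<le> b \<and> inf x a \<le> sup c b"
        by (meson inf_le2 inf_mono le_infI1 le_supI2 order_refl order_trans)
    qed
    finally show ?thesis by (simp add: himp_iff)
  qed
  then show ?thesis by (meson order.antisym order_refl)
qed

lemma cfc_inf: "comp_fun_commute_on UNIV (\<lambda>x acc. inf ((f x)::'a::bounded_lattice) acc)"
  by unfold_locales (auto simp: fun_eq_iff inf_left_commute)

lemma cfc_sup: "comp_fun_commute_on UNIV (\<lambda>x acc. sup ((f x)::'a::bounded_lattice) acc)"
  by unfold_locales (auto simp: fun_eq_iff sup_left_commute)

lemma fmeet_insert: "finite A \<Longrightarrow> c \<notin> A \<Longrightarrow> fmeet f (insert c A) = inf (f c) (fmeet f A)"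
  unfolding fmeet_def by (simp add: comp_fun_commute_on.fold_insert[OF cfc_inf])

lemma fjoin_insert: "finite A \<Longrightarrow> c \<notin> A \<Longrightarrow> fjoin f (insert c A) = sup (f c) (fjoin f A)"
  unfolding fjoin_def by (simp add: comp_fun_commute_on.fold_insert[OF cfc_sup])

lemma fmeet_le_iff: "finite A \<Longrightarrow> x \<le> fmeet f A \<longleftrightarrow> (\<forall>a\<in>A. x \<le> f a)"
proof (induction A rule: finite_induct)
  case empty
  then show ?case by (simp add: fmeet_def)
next
  case (insert a A)
  then show ?case by (simp add: fmeet_insert)
qed

lemma mz_split:
  assumes "c \<notin> fst w" "c \<notin> snd w" "finite (fst w)" "finite (snd w)"
  shows "mzone v w = inf (mzone v (insert c (fst w), snd w)) (mzone v (fst w, insert c (snd w)))"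
  using assms by (simp add: mzone_def fmeet_insert fjoin_insert himp_split[symmetric])

lemma finite_zones: "finite L \<Longrightarrow> finite (zones L)"
proof -
  assume "finite L"
  have "zones L \<subseteq> Pow L \<times> Pow L" unfolding zones_def by auto
  then show ?thesis using \<open>finite L\<close> finite_subset by blast
qed

lemma sem_le_iff: "finite L \<Longrightarrow> x \<le> sem L Z v \<longleftrightarrow> (\<forall>z\<in>missing L Z. x \<le> mzone v z)"
  unfolding sem_def missing_def by (rule fmeet_le_iff) (simp add: finite_zones)


lemma red_missing_iff:
  assumes Z: "Z \<subseteq> zones L" and c: "c \<in> L" and w: "w \<in> zones (L - {c})"
  shows "w \<in> missing (red_L L c) (red_Z Z c) \<longleftrightarrow>
         (insert c (fst w), snd w) \<in> missing L Z \<and> (fst w, insert c (snd w)) \<in> missing L Z"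
proof -
  have cw: "c \<notin> fst w" "c \<notin> snd w" using w by (auto simp: zones_def)
  have z1: "(insert c (fst w), snd w) \<in> zones L" and z2: "(fst w, insert c (snd w)) \<in> zones L"
    using w c cw by (auto simp: zones_def)
  have "w \<in> red_Z Z c \<longleftrightarrow> (insert c (fst w), snd w) \<in> Z \<or> (fst w, insert c (snd w)) \<in> Z"
  proof
    assume "w \<in> red_Z Z c"
    then obtain z where zZ: "z \<in> Z" and zw: "zred z c = w" by (auto simp: red_Z_def)
    have zL: "z \<in> zones L" using zZ Z by auto
    show "(insert c (fst w), snd w) \<in> Z \<or> (fst w, insert c (snd w)) \<in> Z"
    proof (cases "c \<in> fst z")
      case True
      then have "c \<notin> snd z" using zL by (auto simp: zones_def)
      then have "z = (insert c (fst w), snd w)" using True zw by (auto simp: zred_def prod_eq_iff)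
      then show ?thesis using zZ by simp
    next
      case False
      then have "c \<in> snd z" using zL c by (auto simp: zones_def)
      then have "z = (fst w, insert c (snd w))" using False zw by (auto simp: zred_def prod_eq_iff)
      then show ?thesis using zZ by simp
    qed
  next
    assume "(insert c (fst w), snd w) \<in> Z \<or> (fst w, insert c (snd w)) \<in> Z"
    moreover have "zred (insert c (fst w), snd w) c = w" "zred (fst w, insert c (snd w)) c = w"
      using cw by (auto simp: zred_def prod_eq_iff)
    ultimately show "w \<in> red_Z Z c" unfolding red_Z_def by (metis image_eqI)
  qed
  then show ?thesis using w z1 z2 by (auto simp: missing_def red_L_def)
qed

lemma red_le_iff:
  assumes L: "finite L" and Z: "Z \<subseteq> zones L" and c: "c \<in> L"
  shows "x \<le> sem (red_L L c) (red_Z Z c) v \<longleftrightarrow>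
         (\<forall>z\<in>missing L Z. adj z c \<in> missing L Z \<longrightarrow> x \<le> mzone v z)"
proof -
  have fL: "finite (red_L L c)" using L by (simp add: red_L_def)
  have ex: "x \<le> sem (red_L L c) (red_Z Z c) v \<longleftrightarrow>
      (\<forall>w\<in>missing (red_L L c) (red_Z Z c). x \<le> mzone v w)"
    by (rule sem_le_iff[OF fL])
  show ?thesis
  proof
    assume H: "x \<le> sem (red_L L c) (red_Z Z c) v"
    show "\<forall>z\<in>missing L Z. adj z c \<in> missing L Z \<longrightarrow> x \<le> mzone v z"
    proof (intro ballI impI)
      fix z assume zM: "z \<in> missing L Z" and aM: "adj z c \<in> missing L Z"
      have zL: "z \<in> zones L" using zM by (simp add: missing_def)
      define w where "w = zred z c"
      have wz: "w \<in> zones (L - {c})" using zL c by (auto simp: w_def zred_def zones_def)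
      have cw: "c \<notin> fst w" "c \<notin> snd w" using wz by (auto simp: zones_def)
      have fin: "finite (fst w)" "finite (snd w)" using wz L by (auto simp: zones_def intro: finite_subset)
      have both: "{(insert c (fst w), snd w), (fst w, insert c (snd w))} = {z, adj z c}"
        using zL c by (auto simp: w_def zred_def adj_def zones_def prod_eq_iff)
      have "w \<in> missing (red_L L c) (red_Z Z c)"
        using red_missing_iff[OF Z c wz] both zM aM by (metis doubleton_eq_iff)
      then have "x \<le> mzone v w" using H ex by blast
      also have "mzone v w = inf (mzone v (insert c (fst w), snd w)) (mzone v (fst w, insert c (snd w)))"
        by (rule mz_split[OF cw fin])
      also have "\<dots> = inf (mzone v z) (mzone v (adj z c))"
        using both by (metis doubleton_eq_iff inf_commute)
      finally show "x \<le> mzone v z" by simp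
    qed
  next
    assume H: "\<forall>z\<in>missing L Z. adj z c \<in> missing L Z \<longrightarrow> x \<le> mzone v z"
    have "\<forall>w\<in>missing (red_L L c) (red_Z Z c). x \<le> mzone v w"
    proof
      fix w assume wM: "w \<in> missing (red_L L c) (red_Z Z c)"
      have wz: "w \<in> zones (L - {c})" using wM by (simp add: missing_def red_L_def)
      have cw: "c \<notin> fst w" "c \<notin> snd w" using wz by (auto simp: zones_def)
      have fin: "finite (fst w)" "finite (snd w)" using wz L by (auto simp: zones_def intro: finite_subset)
      have m: "(insert c (fst w), snd w) \<in> missing L Z" "(fst w, insert c (snd w)) \<in> missing L Z"
        using red_missing_iff[OF Z c wz] wM by auto
      have a1: "adj (insert c (fst w), snd w) c = (fst w, insert c (snd w))"
        and a2: "adj (fst w, insert c (snd w)) c = (insert c (fst w), snd w)"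
        using cw by (auto simp: adj_def prod_eq_iff)
      have "x \<le> mzone v (insert c (fst w), snd w)" using H m a1 by metis
      moreover have "x \<le> mzone v (fst w, insert c (snd w))" using H m a2 by metis
      ultimately show "x \<le> mzone v w" by (simp add: mz_split[OF cw fin])
    qed
    then show "x \<le> sem (red_L L c) (red_Z Z c) v" using ex by blast
  qed
qed

theorem lemma5:
  fixes L :: "var set" and Z :: "zone set" and v :: "var \<Rightarrow> 'a::heyting_algebra"
  assumes "pure_euler_diagram L Z"
    and "\<forall>z \<in> missing L Z. \<exists>l \<in> L. adj z l \<in> missing L Z"
  shows "fmeet (\<lambda>c. sem (red_L L c) (red_Z Z c) v)
            {c \<in> L. missing (red_L L c) (red_Z Z c) \<noteq> {}}
         = sem L Z v"
proof -
  have L: "finite L" and Z: "Z \<subseteq> zones L" using assms(1) by (auto simp: pure_euler_diagram_def)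
  let ?L' = "{c \<in> L. missing (red_L L c) (red_Z Z c) \<noteq> {}}"
  have fL': "finite ?L'" using L by simp
  have key: "x \<le> fmeet (\<lambda>c. sem (red_L L c) (red_Z Z c) v) ?L' \<longleftrightarrow> x \<le> sem L Z v" for x
  proof -
    have "x \<le> fmeet (\<lambda>c. sem (red_L L c) (red_Z Z c) v) ?L' \<longleftrightarrow>
          (\<forall>c\<in>?L'. \<forall>z\<in>missing L Z. adj z c \<in> missing L Z \<longrightarrow> x \<le> mzone v z)"
      by (simp add: fmeet_le_iff[OF fL'] red_le_iff[OF L Z])
    also have "\<dots> \<longleftrightarrow> (\<forall>z\<in>missing L Z. x \<le> mzone v z)"
    proof
      assume H: "\<forall>c\<in>?L'. \<forall>z\<in>missing L Z. adj z c \<in> missing L Z \<longrightarrow> x \<le> mzone v z"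
      show "\<forall>z\<in>missing L Z. x \<le> mzone v z"
      proof
        fix z assume zM: "z \<in> missing L Z"
        then obtain l where l: "l \<in> L" "adj z l \<in> missing L Z" using assms(2) by blast
        define w where "w = zred z l"
        have zL: "z \<in> zones L" using zM by (simp add: missing_def)
        have wz: "w \<in> zones (L - {l})" using zL l by (auto simp: w_def zred_def zones_def)
        have both: "{(insert l (fst w), snd w), (fst w, insert l (snd w))} = {z, adj z l}"
          using zL l by (auto simp: w_def zred_def adj_def zones_def prod_eq_iff)
        have "w \<in> missing (red_L L l) (red_Z Z l)"
          using red_missing_iff[OF Z l(1) wz] both zM l(2) by (metis doubleton_eq_iff)
        then have "missing (red_L L l) (red_Z Z l) \<noteq> {}" by blast
        then have "l \<in> ?L'" using l by simp
        then show "x \<le> mzone v z" using H zM l by blast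
      qed
    qed blast
    also have "\<dots> \<longleftrightarrow> x \<le> sem L Z v" by (rule sem_le_iff[OF L, symmetric])
    finally show ?thesis .
  qed
  show ?thesis using key[of "sem L Z v"] key[of "fmeet (\<lambda>c. sem (red_L L c) (red_Z Z c) v) ?L'"]
    by (simp add: order.antisym)
qed

end
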